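(* Let $n\ge4$ be even. For each $1\le j\le n-1$, the map $\nu_j:Y_1\to Y_j$, $x\mapsto\sigma_jx\sigma_j^{-1}$, is an order-preserving one-to-one mapping (with respect to the Bruhat order of $\mathcal F_n$ restricted to $Y_1$ and $Y_j$).
   Context: $s_i=(i,i+1)$; permutations compose right to left. $\mathcal F_m$ is the set of fixed-point-free involutions in $S_m$ with conjugation action, height $\ell/2$, and Bruhat order the weakest partial order with $z\le tzt$ for transpositions $t$ with $\ell(z)\le\ell(tzt)$. Regard $\mathcal F_{n-2}\subset S_n$; $w_0$ longest element of $S_n$; $Y_1=\{w_0zs_{n-1}w_0:z\in\mathcal F_{n-2}\}$; $\sigma_j=s_js_{j-1}\cdots s_1$; $Y_j=\sigma_jY_1\sigma_j^{-1}$. *)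

theory Defs
  imports "HOL-Combinatorics.Combinatorics"
begin

text \<open>Permutations of {1..n} are functions nat => nat (permuting {1..n}, identity elsewhere);
  composition is right to left (function composition).\<close>

definition simple_refl :: "nat \<Rightarrow> nat \<Rightarrow> nat" where
  "simple_refl i = transpose i (Suc i)"

definition perm_length :: "nat \<Rightarrow> (nat \<Rightarrow> nat) \<Rightarrow> nat" where
  "perm_length n w = card {(i, j). 1 \<le> i \<and> i < j \<and> j \<le> n \<and> w j < w i}"

definition fpf_inv :: "nat \<Rightarrow> (nat \<Rightarrow> nat) set" where
  "fpf_inv m = {z. z permutes {1..m} \<and> (\<forall>i\<in>{1..m}. z (z i) = i \<and> z i \<noteq> i)}"

definition longest :: "nat \<Rightarrow> nat \<Rightarrow> nat" where
  "longest n = (\<lambda>i. if 1 \<le> i \<and> i \<le> n then n + 1 - i else i)"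

definition bruhat_step :: "nat \<Rightarrow> (nat \<Rightarrow> nat) \<Rightarrow> (nat \<Rightarrow> nat) \<Rightarrow> bool" where
  "bruhat_step n z z' \<longleftrightarrow> z \<in> fpf_inv n \<and>
     (\<exists>a b. a \<in> {1..n} \<and> b \<in> {1..n} \<and> a \<noteq> b \<and> z' = transpose a b \<circ> z \<circ> transpose a b) \<and>
     perm_length n z \<le> perm_length n z'"

definition fpf_bruhat :: "nat \<Rightarrow> (nat \<Rightarrow> nat) \<Rightarrow> (nat \<Rightarrow> nat) \<Rightarrow> bool" where
  "fpf_bruhat n x y \<longleftrightarrow> x \<in> fpf_inv n \<and> y \<in> fpf_inv n \<and> (bruhat_step n)\<^sup>*\<^sup>* x y"

definition Y1 :: "nat \<Rightarrow> (nat \<Rightarrow> nat) set" where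
  "Y1 n = {longest n \<circ> z \<circ> simple_refl (n - 1) \<circ> longest n | z. z \<in> fpf_inv (n - 2)}"

fun sigma :: "nat \<Rightarrow> nat \<Rightarrow> nat" where
  "sigma 0 = id"
| "sigma (Suc j) = simple_refl (Suc j) \<circ> sigma j"

definition nu :: "nat \<Rightarrow> (nat \<Rightarrow> nat) \<Rightarrow> (nat \<Rightarrow> nat)" where
  "nu j x = sigma j \<circ> x \<circ> inv (sigma j)"

definition Yj :: "nat \<Rightarrow> nat \<Rightarrow> (nat \<Rightarrow> nat) set" where
  "Yj n j = (\<lambda>x. sigma j \<circ> x \<circ> inv (sigma j)) ` Y1 n"

end

theory Submission
  imports Defs
begin

definition invset :: "nat \<Rightarrow> (nat \<Rightarrow> nat) \<Rightarrow> (nat \<times> nat) set" where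
  "invset n w = {(i, j). 1 \<le> i \<and> i < j \<and> j \<le> n \<and> w j < w i}"

lemma perm_length_invset: "perm_length n w = card (invset n w)"
  unfolding perm_length_def invset_def by simp

lemma finite_invset: "finite (invset n w)"
  by (rule finite_subset[of _ "{1..n} \<times> {1..n}"]) (auto simp: invset_def)

definition ff :: "nat \<Rightarrow> nat \<Rightarrow> nat \<times> nat \<Rightarrow> nat \<times> nat" where
  "ff i j pq = (if fst pq \<notin> {i..j} \<or> snd pq \<notin> {i..j}
     then (transpose i j (fst pq), transpose i j (snd pq)) else pq)"

lemma ff_invol: "i \<le> j \<Longrightarrow> ff i j (ff i j pq) = pq"
  by (cases pq) (auto simp: ff_def transpose_def split: if_splits)

lemma ff_inj: "i \<le> j \<Longrightarrow> inj (ff i j)"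
  by (metis ff_invol injI)

lemma ff_maps:
  assumes "1 \<le> i" "i < j" "j \<le> n" "w i < w j" "pq \<in> invset n w"
  shows "ff i j pq \<in> invset n (w \<circ> transpose i j) - {(i,j)}"
  using assms
  by (cases pq) (auto simp: ff_def invset_def transpose_def split: if_splits)

lemma len_right_lt:
  assumes "1 \<le> i" "i < j" "j \<le> n" "w i < w j"
  shows "perm_length n w < perm_length n (w \<circ> transpose i j)"
proof -
  have "card (invset n w) = card (ff i j ` invset n w)"
    using ff_inj[of i j] assms by (simp add: card_image inj_on_subset)
  also have "\<dots> \<le> card (invset n (w \<circ> transpose i j) - {(i,j)})"
    by (rule card_mono, simp add: finite_invset, rule image_subsetI, rule ff_maps[OF assms(1-4)])
  also have "\<dots> < card (invset n (w \<circ> transpose i j))"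
    by (rule card_Diff1_less) (use assms finite_invset in \<open>auto simp: invset_def\<close>)
  finally show ?thesis by (simp add: perm_length_invset)
qed

lemma ff_onto:
  assumes "1 \<le> i" "Suc i \<le> n" "pq \<in> invset n (w \<circ> transpose i (Suc i)) - {(i,Suc i)}"
  shows "ff i (Suc i) pq \<in> invset n w"
  using assms
  by (cases pq) (auto simp: ff_def invset_def transpose_def split: if_splits)

lemma len_right_adj:
  assumes "1 \<le> i" "Suc i \<le> n" "w i < w (Suc i)"
  shows "perm_length n (w \<circ> transpose i (Suc i)) = Suc (perm_length n w)"
proof -
  let ?v = "w \<circ> transpose i (Suc i)"
  have "ff i (Suc i) ` invset n w = invset n ?v - {(i,Suc i)}"
  proof
    show "ff i (Suc i) ` invset n w \<subseteq> invset n ?v - {(i,Suc i)}"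
      using ff_maps[of i "Suc i" n w] assms by (intro image_subsetI) simp
    show "invset n ?v - {(i,Suc i)} \<subseteq> ff i (Suc i) ` invset n w"
    proof
      fix pq assume h: "pq \<in> invset n ?v - {(i,Suc i)}"
      then have "ff i (Suc i) pq \<in> invset n w" using ff_onto assms by blast
      then show "pq \<in> ff i (Suc i) ` invset n w"
        using ff_invol[of i "Suc i" pq] by (metis image_eqI le_SucI order_refl)
    qed
  qed
  then have "card (invset n w) = card (invset n ?v - {(i,Suc i)})"
    using ff_inj[of i "Suc i"] by (metis card_image inj_on_subset subset_UNIV le_SucI order_refl)
  moreover have "(i, Suc i) \<in> invset n ?v" using assms by (auto simp: invset_def)
  moreover have "card (invset n ?v) > 0"
    using \<open>(i, Suc i) \<in> invset n ?v\<close> finite_invset card_gt_0_iff by blast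
  ultimately show ?thesis
    using finite_invset by (simp add: perm_length_invset card_Diff_singleton)
qed

lemma len_left_adj:
  assumes inj: "inj_on v {1..n}" and p: "p \<in> {1..n}" and q: "q \<in> {1..n}" and pq: "p < q"
    and vp: "v p = i" and vq: "v q = Suc i"
  shows "perm_length n (transpose i (Suc i) \<circ> v) = Suc (perm_length n v)"
proof -
  let ?t = "transpose i (Suc i)"
  have key: "(?t (v b) < ?t (v a)) = (v b < v a \<or> (a, b) = (p, q))"
    if "a \<in> {1..n}" "b \<in> {1..n}" "a < b" for a b
  proof (cases "v a = i \<and> v b = Suc i \<or> v a = Suc i \<and> v b = i")
    case True
    then show ?thesis
    proof
      assume h: "v a = i \<and> v b = Suc i"
      have "a = p" using inj p that(1) h vp by (metis inj_onD)
      moreover have "b = q" using inj q that(2) h vq by (metis inj_onD)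
      ultimately show ?thesis using h by simp
    next
      assume h: "v a = Suc i \<and> v b = i"
      have "a = q" using inj q that(1) h vq by (metis inj_onD)
      moreover have "b = p" using inj p that(2) h vp by (metis inj_onD)
      ultimately show ?thesis using h pq that by simp
    qed
  next
    case False
    then have "(a, b) \<noteq> (p, q)" using vp vq by auto
    moreover have "(?t (v b) < ?t (v a)) = (v b < v a)"
      using False by (auto simp: transpose_def)
    ultimately show ?thesis by auto
  qed
  have "invset n (?t \<circ> v) = insert (p, q) (invset n v)"
    using key p q pq by (auto simp: invset_def)
  moreover have "(p, q) \<notin> invset n v" using vp vq by (auto simp: invset_def)
  ultimately show ?thesis by (simp add: perm_length_invset finite_invset)
qed

lemma match_rest:
  assumes A: "A = {a,b,c,d}" and f0: "\<forall>x\<in>A. f x \<in> A \<and> f (f x) = x \<and> f x \<noteq> x"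
    and dist: "a \<noteq> b" "a \<noteq> c" "a \<noteq> d" "b \<noteq> c" "b \<noteq> d" "c \<noteq> d"
    and fa: "f a = b"
  shows "f b = a \<and> f c = d \<and> f d = c"
proof -
  have f: "\<forall>x\<in>{a,b,c,d}. f x \<in> {a,b,c,d} \<and> f (f x) = x \<and> f x \<noteq> x" using f0 by (simp only: A)
  have fb: "f b = a" using f fa by force
  have "f c \<in> {a,b,c,d}" "f (f c) = c" "f c \<noteq> c" using f by auto
  then have fc: "f c = d" using fa fb dist by auto
  have "f d = c" using f fc by force
  then show ?thesis using fb fc by simp
qed
lemma len4: "length xs = 4 \<Longrightarrow> \<exists>a b c d. xs = [a,b,c,d]"
  by (auto simp: numeral_eq_Suc length_Suc_conv)

lemma four_sorted:
  assumes "finite S" "card S = 4"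
  obtains a b c d where "a < b" "b < c" "c < d" "S = {a,b,c,d::nat}"
proof -
  let ?xs = "sorted_list_of_set S"
  have len: "length ?xs = 4" using assms by simp
  have st: "sorted_wrt (<) ?xs" by simp
  have set: "set ?xs = S" using assms by simp
  obtain a b c d where xs: "?xs = [a,b,c,d]" using len4[OF len] by blast
  show ?thesis using that st set xs by auto
qed
lemma four_point:
  assumes fin: "finite S" and c4: "card S = 4" and sub: "S \<subseteq> {1..n}"
    and agree: "\<forall>x. x \<notin> S \<longrightarrow> z x = z' x"
    and fz: "\<forall>x\<in>S. z x \<in> S \<and> z (z x) = x \<and> z x \<noteq> x"
    and fz': "\<forall>x\<in>S. z' x \<in> S \<and> z' (z' x) = x \<and> z' x \<noteq> x"
    and lt: "z' (Min S) < z (Min S)"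
  shows "perm_length n z' < perm_length n z"
proof -
  obtain a b c d where o: "a < b" "b < c" "c < d" and S: "S = {a,b,c,d}"
    using four_sorted[OF fin c4] by blast
  have mn: "Min S = a" using S o by (simp add: Min_insert2)
  have rng: "1 \<le> a" "d \<le> n" using sub S by auto
  have za: "z a \<in> {b,c,d}" "z' a \<in> {b,c,d}" using fz fz' S by auto
  have lt': "z' a < z a" using lt mn by simp
  consider "z' a = b" "z a = c" | "z' a = b" "z a = d" | "z' a = c" "z a = d"
    using za lt' o by auto
  then show ?thesis
  proof cases
    case 1
    have z': "z' b = a" "z' c = d" "z' d = c" using match_rest[OF S fz'] 1 o by auto
    have z: "z c = a" "z b = d" "z d = b" using match_rest[of S a c b d z] S fz 1 o by auto
    have eq: "z = z' \<circ> transpose b c \<circ> transpose a d"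
    proof
      fix x
      show "z x = (z' \<circ> transpose b c \<circ> transpose a d) x"
      proof (cases "x \<in> S")
        case True
        then consider "x = a" | "x = b" | "x = c" | "x = d" using S by blast
        then show ?thesis using o 1 z z' by cases (simp_all add: transpose_def)
      next
        case False
        then show ?thesis using agree S by (simp add: transpose_def)
      qed
    qed
    have "perm_length n z' < perm_length n (z' \<circ> transpose b c)"
      by (rule len_right_lt) (use rng o 1 z' in auto)
    also have "\<dots> < perm_length n (z' \<circ> transpose b c \<circ> transpose a d)"
      by (rule len_right_lt) (use rng o 1 z' in auto)
    finally show ?thesis using eq by simp
  next
    case 2
    have z': "z' b = a" "z' c = d" "z' d = c" using match_rest[OF S fz'] 2 o by auto
    have z: "z d = a" "z b = c" "z c = b" using match_rest[of S a d b c z] S fz 2 o by auto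
    let ?y = "z' \<circ> transpose b c \<circ> transpose a d"
    have eq: "z = ?y \<circ> transpose c d \<circ> transpose a b"
    proof
      fix x
      show "z x = (?y \<circ> transpose c d \<circ> transpose a b) x"
      proof (cases "x \<in> S")
        case True
        then consider "x = a" | "x = b" | "x = c" | "x = d" using S by blast
        then show ?thesis using o 2 z z' by cases (simp_all add: transpose_def)
      next
        case False
        then show ?thesis using agree S by (simp add: transpose_def)
      qed
    qed
    have "perm_length n z' < perm_length n (z' \<circ> transpose b c)"
      by (rule len_right_lt) (use rng o 2 z' in auto)
    also have "\<dots> < perm_length n ?y"
      by (rule len_right_lt) (use rng o 2 z' in auto)
    also have "\<dots> < perm_length n (?y \<circ> transpose c d)"
      by (rule len_right_lt) (use rng o 2 z' in \<open>auto simp: transpose_def\<close>)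
    also have "\<dots> < perm_length n (?y \<circ> transpose c d \<circ> transpose a b)"
      by (rule len_right_lt) (use rng o 2 z' in \<open>auto simp: transpose_def\<close>)
    finally show ?thesis using eq by simp
  next
    case 3
    have z': "z' c = a" "z' b = d" "z' d = b" using match_rest[of S a c b d z'] S fz' 3 o by auto
    have z: "z d = a" "z b = c" "z c = b" using match_rest[of S a d b c z] S fz 3 o by auto
    have eq: "z = z' \<circ> transpose c d \<circ> transpose a b"
    proof
      fix x
      show "z x = (z' \<circ> transpose c d \<circ> transpose a b) x"
      proof (cases "x \<in> S")
        case True
        then consider "x = a" | "x = b" | "x = c" | "x = d" using S by blast
        then show ?thesis using o 3 z z' by cases (simp_all add: transpose_def)
      next
        case False
        then show ?thesis using agree S by (simp add: transpose_def)
      qed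
    qed
    have "perm_length n z' < perm_length n (z' \<circ> transpose c d)"
      by (rule len_right_lt) (use rng o 3 z' in auto)
    also have "\<dots> < perm_length n (z' \<circ> transpose c d \<circ> transpose a b)"
      by (rule len_right_lt) (use rng o 3 z' in \<open>auto simp: transpose_def\<close>)
    finally show ?thesis using eq by simp
  qed
qed

lemma fpf_props:
  assumes "z \<in> fpf_inv n"
  shows "z permutes {1..n}" "\<And>x. z (z x) = x" "\<And>x. x \<in> {1..n} \<Longrightarrow> z x \<noteq> x"
    "\<And>x. x \<in> {1..n} \<Longrightarrow> z x \<in> {1..n}" "\<And>x. x \<notin> {1..n} \<Longrightarrow> z x = x" "inj z"
proof -
  show p: "z permutes {1..n}" using assms by (simp add: fpf_inv_def)
  show "\<And>x. x \<in> {1..n} \<Longrightarrow> z x \<noteq> x" using assms by (simp add: fpf_inv_def)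
  show "\<And>x. x \<in> {1..n} \<Longrightarrow> z x \<in> {1..n}" using permutes_in_image[OF p] by blast
  show o: "\<And>x. x \<notin> {1..n} \<Longrightarrow> z x = x" using p by (simp add: permutes_not_in)
  show "\<And>x. z (z x) = x" using assms o by (auto simp: fpf_inv_def)
  show "inj z" using p by (rule permutes_inj)
qed

lemma step_helper:
  assumes z: "z \<in> fpf_inv n" and ab: "a \<in> {1, z 1}" "b \<in> {1..n}" "b \<notin> {1, z 1}"
    and z': "z' = transpose a b \<circ> z \<circ> transpose a b" and n: "1 \<le> n"
    and lt: "z' 1 < z 1"
  shows "perm_length n z' < perm_length n z"
proof -
  note P = fpf_props[OF z]
  let ?t = "transpose a b"
  define S where "S = {1, z 1, b, z b}"
  have one: "(1::nat) \<in> {1..n}" using n by simp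
  have zz: "z (z x) = x" for x using P(2) .
  have zi: "z x = z y \<longleftrightarrow> x = y" for x y using P(6) by (auto dest: injD)
  have d1: "z 1 \<noteq> 1" using P(3)[OF one] .
  have d2: "z b \<noteq> 1" by (metis ab(3) insertCI zz)
  have d3: "z b \<noteq> z 1" using ab(3) zi by auto
  have d4: "z b \<noteq> b" using P(3)[OF ab(2)] .
  have Ssub: "S \<subseteq> {1..n}" using P(4)[OF one] P(4)[OF ab(2)] one ab(2) by (auto simp: S_def)
  have c4: "card S = 4" using d1 d2 d3 d4 ab(3) by (auto simp: S_def)
  have fin: "finite S" by (simp add: S_def)
  have aS: "a \<in> S" "b \<in> S" using ab by (auto simp: S_def)
  have zS: "z x \<in> S" if "x \<in> S" for x using that zz by (auto simp: S_def)
  have tS: "?t x \<in> S" if "x \<in> S" for x using that aS by (auto simp: transpose_def)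
  have agree: "\<forall>x. x \<notin> S \<longrightarrow> z x = z' x"
  proof (intro allI impI)
    fix x assume x: "x \<notin> S"
    then have "x \<noteq> a" "x \<noteq> b" using aS by auto
    moreover have "z x \<notin> S" using x zS zz by metis
    then have "z x \<noteq> a" "z x \<noteq> b" using aS by auto
    ultimately show "z x = z' x" by (simp add: z')
  qed
  have fz: "\<forall>x\<in>S. z x \<in> S \<and> z (z x) = x \<and> z x \<noteq> x"
    using zS zz P(3) Ssub by blast
  have fz': "\<forall>x\<in>S. z' x \<in> S \<and> z' (z' x) = x \<and> z' x \<noteq> x"
  proof
    fix x assume x: "x \<in> S"
    have "z' x \<in> S" using x zS tS by (simp add: z')
    moreover have "z' (z' x) = x" by (simp add: z' zz)
    moreover have "z' x \<noteq> x"
    proof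
      assume "z' x = x"
      then have "z (?t x) = ?t x" by (simp add: z') (metis transpose_involutory)
      moreover have "?t x \<in> {1..n}" using tS x Ssub by blast
      ultimately show False using P(3) by blast
    qed
    ultimately show "z' x \<in> S \<and> z' (z' x) = x \<and> z' x \<noteq> x" by blast
  qed
  have mn: "Min S = 1"
    by (rule Min_eqI) (use fin Ssub in \<open>auto simp: S_def\<close>)
  show ?thesis
    by (rule four_point[OF fin c4 Ssub agree fz fz']) (simp only: mn lt)
qed

lemma step_mono1:
  assumes z: "z \<in> fpf_inv n" and ab: "a \<in> {1..n}" "b \<in> {1..n}" "a \<noteq> b"
    and z': "z' = transpose a b \<circ> z \<circ> transpose a b" and n: "1 \<le> n"
    and len: "perm_length n z \<le> perm_length n z'"
  shows "z 1 \<le> z' 1"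
proof (rule ccontr)
  assume "\<not> z 1 \<le> z' 1"
  then have lt: "z' 1 < z 1" by simp
  note P = fpf_props[OF z]
  have zz: "z (z x) = x" for x using P(2) .
  consider "a \<in> {1, z 1}" "b \<notin> {1, z 1}" | "b \<in> {1, z 1}" "a \<notin> {1, z 1}"
    | "a \<in> {1, z 1}" "b \<in> {1, z 1}" | "a \<notin> {1, z 1}" "b \<notin> {1, z 1}" by blast
  then show False
  proof cases
    case 1
    show False using step_helper[OF z 1(1) ab(2) 1(2) z' n lt] len by simp
  next
    case 2
    have z'': "z' = transpose b a \<circ> z \<circ> transpose b a" using z' by (simp add: transpose_commute)
    show False using step_helper[OF z 2(1) ab(1) 2(2) z'' n lt] len by simp
  next
    case 3
    then have "z' 1 = z 1" using ab(3) zz by (auto simp: z' transpose_def)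
    then show False using lt by simp
  next
    case 4
    then have "z' 1 = z 1" by (auto simp: z' transpose_def)
    then show False using lt by simp
  qed
qed

lemma sigma_apply:
  "sigma j i = (if i = 1 then Suc j else if 2 \<le> i \<and> i \<le> Suc j then i - 1 else i)"
  by (induction j arbitrary: i) (auto simp: simple_refl_def transpose_def)

definition sinv :: "nat \<Rightarrow> nat \<Rightarrow> nat" where
  "sinv j i = (if i = Suc j then 1 else if 1 \<le> i \<and> i \<le> j then Suc i else i)"

lemma sinv_sigma [simp]: "sinv j (sigma j y) = y"
  by (auto simp: sinv_def sigma_apply)

lemma sigma_sinv [simp]: "sigma j (sinv j y) = y"
  by (auto simp: sinv_def sigma_apply)

lemma inv_sigma: "inv (sigma j) = sinv j"
  by (rule inv_unique_comp) (auto simp: fun_eq_iff)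

lemma nu_eq: "nu j x = sigma j \<circ> x \<circ> sinv j"
  by (simp add: nu_def inv_sigma)

lemma sigma_permutes: "Suc j \<le> n \<Longrightarrow> sigma j permutes {1..n}"
proof (induction j)
  case 0
  show ?case unfolding sigma.simps by (rule permutes_id)
next
  case (Suc j)
  have "simple_refl (Suc j) permutes {1..n}"
    unfolding simple_refl_def using Suc.prems by (intro permutes_swap_id) auto
  moreover have "sigma j permutes {1..n}" using Suc by simp
  ultimately show ?case unfolding sigma.simps by (rule permutes_compose[rotated])
qed

lemma conj_fpf:
  assumes f: "f \<in> fpf_inv n" and g: "g permutes {1..n}"
  shows "g \<circ> f \<circ> inv g \<in> fpf_inv n"
proof -
  note P = fpf_props[OF f]
  have "g \<circ> f \<circ> inv g permutes {1..n}"
    using g P(1) by (intro permutes_compose permutes_inv)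
  moreover have "(g \<circ> f \<circ> inv g) ((g \<circ> f \<circ> inv g) i) = i \<and> (g \<circ> f \<circ> inv g) i \<noteq> i"
    if "i \<in> {1..n}" for i
  proof -
    have "inv g i \<in> {1..n}" using that permutes_in_image[OF permutes_inv[OF g]] by blast
    then have "f (inv g i) \<noteq> inv g i" using P(3) by blast
    then have "g (f (inv g i)) \<noteq> i"
      by (metis g permutes_inverses(2))
    moreover have "g (f (inv g (g (f (inv g i))))) = i"
      using g P(2) by (simp add: permutes_inverses)
    ultimately show ?thesis by simp
  qed
  ultimately show ?thesis by (simp add: fpf_inv_def)
qed

lemma nu_fpf: "u \<in> fpf_inv n \<Longrightarrow> Suc j \<le> n \<Longrightarrow> nu j u \<in> fpf_inv n"
  unfolding nu_def using conj_fpf sigma_permutes by blast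

lemma nu_len_step:
  assumes u: "u \<in> fpf_inv n" "u 1 = 2" and j: "1 \<le> j" "Suc (Suc j) \<le> n"
  shows "perm_length n (nu (Suc j) u) = perm_length n (nu j u) + 2"
proof -
  note P = fpf_props[OF u(1)]
  let ?s = "transpose (Suc j) (Suc (Suc j))"
  define w where "w = sigma j \<circ> u \<circ> sinv j"
  have u2: "u 2 = 1" using P(2)[of 1] u(2) by simp
  have nuS: "nu (Suc j) u = ?s \<circ> (w \<circ> ?s)"
    by (auto simp: nu_eq w_def fun_eq_iff simple_refl_def sinv_def transpose_def)
  have uj: "u (Suc (Suc j)) \<noteq> 1" "u (Suc (Suc j)) \<noteq> 2"
  proof -
    show "u (Suc (Suc j)) \<noteq> 1"
    proof
      assume "u (Suc (Suc j)) = 1"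
      then have "Suc (Suc j) = u 1" using P(2) by metis
      then show False using u(2) j by simp
    qed
    show "u (Suc (Suc j)) \<noteq> 2"
    proof
      assume "u (Suc (Suc j)) = 2"
      then have "Suc (Suc j) = u 2" using P(2) by metis
      then show False using u2 j by simp
    qed
  qed
  have w1: "w (Suc j) = 1" using j u2 u(2) by (simp add: w_def sinv_def sigma_apply)
  have "u (Suc (Suc j)) \<in> {1..n}" using P(4) j by simp
  then have w2: "w (Suc (Suc j)) > 1"
    using uj j by (simp add: w_def sinv_def sigma_apply) arith
  have A: "perm_length n (w \<circ> ?s) = Suc (perm_length n w)"
    by (rule len_right_adj) (use j w1 w2 in auto)
  have wperm: "w permutes {1..n}"
    unfolding w_def using conj_fpf[OF u(1) sigma_permutes[of j n]] j inv_sigma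
    by (simp add: fpf_inv_def)
  have sperm: "?s permutes {1..n}" using j by (intro permutes_swap_id) auto
  have vperm: "w \<circ> ?s permutes {1..n}" using sperm wperm by (rule permutes_compose)
  define q where "q = sigma (Suc j) (u (Suc (Suc j)))"
  have qn: "q \<in> {1..n}"
    unfolding q_def
    using sigma_permutes[of "Suc j" n] j P(4)[of "Suc (Suc j)"] permutes_in_image by fastforce
  have q1: "1 < q" using uj qn by (simp add: q_def sigma_apply simple_refl_def transpose_def) (auto simp: sigma_apply)
  have u2s: "u (Suc (Suc 0)) = Suc 0" using u2 by (simp add: numeral_2_eq_2)
  have v1: "(w \<circ> ?s) 1 = Suc j" using j u2s by (simp add: w_def sinv_def sigma_apply)
  have vq: "(w \<circ> ?s) q = Suc (Suc j)"
  proof -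
    have "sinv j (?s q) = sinv (Suc j) q"
      by (auto simp: sinv_def transpose_def)
    also have "\<dots> = u (Suc (Suc j))" unfolding q_def by (rule sinv_sigma)
    finally show ?thesis using P(2) by (simp add: w_def sigma_apply)
  qed
  have B: "perm_length n (?s \<circ> (w \<circ> ?s)) = Suc (perm_length n (w \<circ> ?s))"
    by (rule len_left_adj[OF permutes_inj_on[OF vperm] _ qn q1 v1 vq]) (use j in auto)
  have "nu j u = w" by (simp add: nu_eq w_def)
  then show ?thesis using A B nuS by simp
qed

lemma nu_one: "u \<in> fpf_inv n \<Longrightarrow> u 1 = 2 \<Longrightarrow> nu 1 u = u"
proof -
  assume u: "u \<in> fpf_inv n" "u 1 = 2"
  note P = fpf_props[OF u(1)]
  have u2: "u 2 = 1" using P(2)[of 1] u(2) by simp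
  have o: "u x \<noteq> 1 \<and> u x \<noteq> 2" if "x \<noteq> 1" "x \<noteq> 2" for x
    using that P(2) u(2) u2 by metis
  show "nu 1 u = u"
  proof
    fix x
    show "nu 1 u x = u x"
    proof (cases "x = 1 \<or> x = 2")
      case True
      then show ?thesis using u(2) u2 by (auto simp: nu_eq sinv_def sigma_apply simple_refl_def transpose_def numeral_2_eq_2)
    next
      case False
      then show ?thesis using o[of x] by (auto simp: nu_eq sinv_def sigma_apply simple_refl_def transpose_def numeral_2_eq_2)
    qed
  qed
qed

lemma nu_len:
  assumes u: "u \<in> fpf_inv n" "u 1 = 2"
  shows "1 \<le> j \<Longrightarrow> Suc j \<le> n \<Longrightarrow> perm_length n (nu j u) = perm_length n u + 2 * (j - 1)"
proof (induction j)
  case 0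
  then show ?case by simp
next
  case (Suc j)
  show ?case
  proof (cases "j = 0")
    case True
    then show ?thesis using nu_one[OF u] by simp
  next
    case False
    then have "1 \<le> j" by simp
    then have "perm_length n (nu (Suc j) u) = perm_length n (nu j u) + 2"
      using nu_len_step[OF u] Suc.prems by simp
    then show ?thesis using Suc.IH \<open>1 \<le> j\<close> Suc.prems False by simp
  qed
qed

lemma sigma_inj: "inj (sigma j)"
  by (metis injI sinv_sigma)

lemma transpose_conj_apply: "inj g \<Longrightarrow> transpose (g a) (g b) (g y) = g (transpose a b y)"
  by (auto simp: transpose_def inj_eq)

lemma nu_transpose:
  "nu j (transpose a b \<circ> u \<circ> transpose a b)
   = transpose (sigma j a) (sigma j b) \<circ> nu j u \<circ> transpose (sigma j a) (sigma j b)"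
proof
  fix x
  let ?t' = "transpose (sigma j a) (sigma j b)"
  have e1: "?t' (sigma j y) = sigma j (transpose a b y)" for y
    using transpose_conj_apply[OF sigma_inj] .
  have e2: "sinv j (?t' x) = transpose a b (sinv j x)"
    by (metis e1 sigma_sinv sinv_sigma)
  show "nu j (transpose a b \<circ> u \<circ> transpose a b) x = (?t' \<circ> nu j u \<circ> ?t') x"
    by (simp add: nu_eq e1 e2)
qed

lemma step_nu:
  assumes u: "u \<in> fpf_inv n" "u 1 = 2" and v: "v \<in> fpf_inv n" "v 1 = 2"
    and st: "bruhat_step n u v" and j: "1 \<le> j" "Suc j \<le> n"
  shows "bruhat_step n (nu j u) (nu j v)"
proof -
  obtain a b where ab: "a \<in> {1..n}" "b \<in> {1..n}" "a \<noteq> b"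
    and veq: "v = transpose a b \<circ> u \<circ> transpose a b"
    and len: "perm_length n u \<le> perm_length n v"
    using st by (auto simp: bruhat_step_def)
  have sp: "sigma j permutes {1..n}" using sigma_permutes j by simp
  have "sigma j a \<in> {1..n}" "sigma j b \<in> {1..n}"
    using ab permutes_in_image[OF sp] by auto
  moreover have "sigma j a \<noteq> sigma j b" using ab(3) sigma_inj by (auto dest: injD)
  moreover have "nu j v = transpose (sigma j a) (sigma j b) \<circ> nu j u \<circ> transpose (sigma j a) (sigma j b)"
    using veq nu_transpose by simp
  moreover have "perm_length n (nu j u) \<le> perm_length n (nu j v)"
    using nu_len[OF u j] nu_len[OF v j] len by simp
  moreover have "nu j u \<in> fpf_inv n" using nu_fpf u j by blast
  ultimately show ?thesis unfolding bruhat_step_def by blast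
qed

lemma fpf_ge2: "u \<in> fpf_inv n \<Longrightarrow> 1 \<le> n \<Longrightarrow> 2 \<le> u 1"
  using fpf_props(3,4)[of u n 1] by fastforce

lemma chain_nu:
  assumes ch: "(bruhat_step n)\<^sup>*\<^sup>* x y" and n: "1 \<le> n" and j: "1 \<le> j" "Suc j \<le> n"
  shows "x \<in> fpf_inv n \<Longrightarrow> x 1 = 2 \<Longrightarrow> y \<in> fpf_inv n \<Longrightarrow> y 1 = 2
    \<Longrightarrow> (bruhat_step n)\<^sup>*\<^sup>* (nu j x) (nu j y)"
  using ch
proof (induction rule: rtranclp_induct)
  case base
  then show ?case by simp
next
  case (step u v)
  have ufpf: "u \<in> fpf_inv n" using step.hyps(2) by (simp add: bruhat_step_def)
  obtain a b where ab: "a \<in> {1..n}" "b \<in> {1..n}" "a \<noteq> b"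
    and veq: "v = transpose a b \<circ> u \<circ> transpose a b"
    and len: "perm_length n u \<le> perm_length n v"
    using step.hyps(2) by (auto simp: bruhat_step_def)
  have "u 1 \<le> v 1" by (rule step_mono1[OF ufpf ab veq n len])
  then have u1: "u 1 = 2" using fpf_ge2[OF ufpf n] step.prems(4) by simp
  have "(bruhat_step n)\<^sup>*\<^sup>* (nu j x) (nu j u)" using step.IH step.prems ufpf u1 by simp
  moreover have "bruhat_step n (nu j u) (nu j v)"
    by (rule step_nu[OF ufpf u1 step.prems(3,4) step.hyps(2) j])
  ultimately show ?case by simp
qed

lemma longest_invol: "longest n (longest n x) = x"
  by (auto simp: longest_def)

lemma longest_permutes: "longest n permutes {1..n}"
  unfolding permutes_def
proof (intro conjI allI impI)
  fix x :: nat assume "x \<notin> {1..n}" then show "longest n x = x" by (auto simp: longest_def)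
next
  fix y show "\<exists>!x. longest n x = y"
    by (metis longest_invol)
qed

lemma inv_longest: "inv (longest n) = longest n"
  by (rule inv_unique_comp) (auto simp: fun_eq_iff longest_invol)

lemma zs_fpf:
  assumes z: "z \<in> fpf_inv (n - 2)" and n: "4 \<le> n"
  shows "z \<circ> simple_refl (n - 1) \<in> fpf_inv n"
proof -
  have zp: "z permutes {1..n-2}" using z by (simp add: fpf_inv_def)
  have zp': "z permutes {1..n}" by (rule permutes_subset[OF zp]) auto
  have sn: "simple_refl (n - 1) = transpose (n - 1) n" using n by (simp add: simple_refl_def)
  have sp: "simple_refl (n - 1) permutes {1..n}" unfolding sn using n by (intro permutes_swap_id) auto
  have perm: "z \<circ> simple_refl (n - 1) permutes {1..n}" by (rule permutes_compose[OF sp zp'])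
  have zo: "z x = x" if "x \<notin> {1..n-2}" for x using permutes_not_in[OF zp that] .
  have zi: "z x \<in> {1..n-2}" if "x \<in> {1..n-2}" for x using permutes_in_image[OF zp] that by blast
  have zz: "z (z x) = x \<and> z x \<noteq> x" if "x \<in> {1..n-2}" for x using z that by (simp add: fpf_inv_def)
  have "n \<notin> {1..n-2}" "n - 1 \<notin> {1..n-2}" using n by auto
  then have zn: "z n = n" "z (n - 1) = n - 1" using zo by blast+
  have s1: "simple_refl (n - 1) (n - 1) = n" "simple_refl (n - 1) n = n - 1"
    using n by (auto simp: simple_refl_def)
  have s2: "simple_refl (n - 1) x = x" if "x \<in> {1..n-2}" for x
    using n that by (auto simp: simple_refl_def transpose_def)
  have "(z \<circ> simple_refl (n - 1)) ((z \<circ> simple_refl (n - 1)) i) = i \<and> (z \<circ> simple_refl (n - 1)) i \<noteq> i"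
    if i: "i \<in> {1..n}" for i
  proof -
    consider "i \<in> {1..n-2}" | "i = n - 1" | "i = n" using i by fastforce
    then show ?thesis
    proof cases
      case 1
      then have "z i \<in> {1..n-2}" using zi by blast
      then show ?thesis using 1 zz[OF 1] s2 by simp
    next
      case 2
      then show ?thesis using n zn s1 by simp
    next
      case 3
      then show ?thesis using n zn s1 by simp
    qed
  qed
  then show ?thesis using perm by (simp add: fpf_inv_def)
qed

lemma Y1_sub:
  assumes "y \<in> Y1 n" "4 \<le> n"
  shows "y \<in> fpf_inv n \<and> y 1 = 2"
proof -
  obtain z where z: "z \<in> fpf_inv (n - 2)" and y: "y = longest n \<circ> z \<circ> simple_refl (n - 1) \<circ> longest n"
    using assms(1) by (auto simp: Y1_def)
  have "longest n \<circ> (z \<circ> simple_refl (n - 1)) \<circ> inv (longest n) \<in> fpf_inv n"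
    by (rule conj_fpf[OF zs_fpf[OF z assms(2)] longest_permutes])
  then have "y \<in> fpf_inv n" by (simp add: y inv_longest o_assoc)
  moreover have "z (n - 1) = n - 1"
    using z by (intro permutes_not_in[of z "{1..n-2}"]) (auto simp: fpf_inv_def)
  then have "y 1 = 2" using assms(2) by (auto simp: y longest_def simple_refl_def transpose_def)
  ultimately show ?thesis by simp
qed

theorem proposition3p5:
  fixes n j :: nat
  assumes "even n" and "4 \<le> n" and "1 \<le> j" and "j \<le> n - 1"
  shows "(\<forall>x\<in>Y1 n. nu j x \<in> Yj n j)
       \<and> inj_on (nu j) (Y1 n)
       \<and> (\<forall>x\<in>Y1 n. \<forall>y\<in>Y1 n. fpf_bruhat n x y \<longrightarrow> fpf_bruhat n (nu j x) (nu j y))"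
proof (intro conjI ballI impI)
  fix x assume "x \<in> Y1 n"
  then show "nu j x \<in> Yj n j" by (auto simp: Yj_def nu_def)
next
  show "inj_on (nu j) (Y1 n)"
  proof (rule inj_onI)
    fix x y assume "nu j x = nu j y"
    then have "sinv j (nu j x (sigma j t)) = sinv j (nu j y (sigma j t))" for t by simp
    then show "x = y" by (simp add: nu_eq fun_eq_iff)
  qed
next
  fix x y assume x: "x \<in> Y1 n" and y: "y \<in> Y1 n" and b: "fpf_bruhat n x y"
  have j: "Suc j \<le> n" using assms by simp
  have n1: "1 \<le> n" using assms by simp
  have X: "x \<in> fpf_inv n" "x 1 = 2" using Y1_sub[OF x assms(2)] by auto
  have Y: "y \<in> fpf_inv n" "y 1 = 2" using Y1_sub[OF y assms(2)] by auto
  have ch: "(bruhat_step n)\<^sup>*\<^sup>* x y" using b by (simp add: fpf_bruhat_def)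
  show "fpf_bruhat n (nu j x) (nu j y)"
    unfolding fpf_bruhat_def
    using chain_nu[OF ch n1 assms(3) j X Y] nu_fpf[OF X(1) j] nu_fpf[OF Y(1) j] by simp
qed

end
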